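(* Let $\mathcal{A}$ be a complete topological ring and let $\mathcal{B}$ be a complete topological $\mathcal{A}$-algebra. Then there is a one-to-one correspondence between restricted exponential $\mathcal{A}$-homomorphisms $\mathrm{e}\colon\mathcal{B}\rightarrow\mathcal{B}\{T\}$ and topologically integrable iterated higher $\mathcal{A}$-derivations of $\mathcal{B}$, given by associating to $\mathrm{e}=\sum_{i\in\mathbb{N}}\mathrm{e}_iT^i$ the family $D=\{D^{(i)}\}_{i\ge0}$ with $D^{(i)}=\mathrm{e}_i$ (and conversely $D\mapsto\sum_i D^{(i)}T^i$).
   Context: Conventions: all topological rings and modules are linearly topologized and admit a countable fundamental system of neighbourhoods of $0$ consisting of open ideals (resp. submodules); homomorphisms of topological rings/modules are continuous. A topological ring is complete if the canonical map to $\varprojlim_{\mathfrak{a}}\mathcal{A}/\mathfrak{a}$ (over open ideals, quotients discrete, inverse limit topology) is an isomorphism of topological rings. A complete topological $\mathcal{A}$-algebra is a complete topological ring with a continuous ring homomorphism from $\mathcal{A}$. For a complete topological ring $\mathcal{B}$, $\mathcal{B}\{T\}$ (resp. $\mathcal{B}\{T,T'\}$) is the ring of restricted power series: formal power series whose coefficients converge to $0$ (for every open ideal $\mathfrak{b}$, all but finitely many coefficients lie in $\mathfrak{b}$), topologized by the ideals of series with all coefficients in $\mathfrak{b}$, $\mathfrak{b}$ open. A restricted exponential $\mathcal{A}$-homomorphism is a continuous $\mathcal{A}$-algebra homomorphism $\mathrm{e}\colon\mathcal{B}\to\mathcal{B}\{T\}$, written $\mathrm{e}(b)=\sum_i\mathrm{e}_i(b)T^i$,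 such that $\mathrm{e}_0=\mathrm{id}_{\mathcal{B}}$ and, for every $b\in\mathcal{B}$, $\sum_{(i,j)\in\mathbb{N}^2}\mathrm{e}_j(\mathrm{e}_i(b))T'^jT^i=\sum_{\ell\in\mathbb{N}}\mathrm{e}_\ell(b)(T+T')^\ell$ in $\mathcal{B}\{T,T'\}$. A continuous iterated higher $\mathcal{A}$-derivation of $\mathcal{B}$ is a family $D=\{D^{(i)}\}_{i\ge0}$ of continuous $\mathcal{A}$-module homomorphisms $\mathcal{B}\to\mathcal{B}$ with $D^{(0)}=\mathrm{id}$, $D^{(i)}(bb')=\sum_{j=0}^iD^{(j)}(b)D^{(i-j)}(b')$ and $D^{(i)}\circ D^{(j)}=\binom{i+j}{i}D^{(i+j)}$. It is topologically integrable if $(D^{(i)})_i$ converges continuously to $0$: for every $b\in\mathcal{B}$ and open ideal $\mathfrak{b}'$ there exist an open ideal $\mathfrak{b}$ and $n_0$ with $D^{(n)}(b+\mathfrak{b})\subseteq\mathfrak{b}'$ for all $n\ge n_0$. *)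

theory Defs
  imports "HOL-Computational_Algebra.Formal_Power_Series"
begin

text \<open>Rings are commutative with 1 (type class comm_ring_1). A linear topology with a
countable fundamental system of open ideals is given by a decreasing sequence of ideals I.\<close>

definition ideal_in :: "'a::comm_ring_1 set \<Rightarrow> bool" where
  "ideal_in J \<longleftrightarrow> 0 \<in> J \<and> (\<forall>x\<in>J. \<forall>y\<in>J. x + y \<in> J) \<and> (\<forall>r. \<forall>x\<in>J. r * x \<in> J)"

definition lin_top :: "(nat \<Rightarrow> 'a::comm_ring_1 set) \<Rightarrow> bool" where
  "lin_top I \<longleftrightarrow> (\<forall>n. ideal_in (I n)) \<and> (\<forall>n. I (Suc n) \<subseteq> I n)"

definition open_ideal :: "(nat \<Rightarrow> 'a::comm_ring_1 set) \<Rightarrow> 'a set \<Rightarrow> bool" where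
  "open_ideal I J \<longleftrightarrow> ideal_in J \<and> (\<exists>n. I n \<subseteq> J)"

text \<open>Elements of the inverse limit of the discrete quotients A / I n: compatible systems of cosets.\<close>
definition compatible_system :: "(nat \<Rightarrow> 'a::comm_ring_1 set) \<Rightarrow> (nat \<Rightarrow> 'a set) \<Rightarrow> bool" where
  "compatible_system I X \<longleftrightarrow> (\<forall>n. \<exists>c. X n = (\<lambda>y. c + y) ` I n) \<and> (\<forall>n. X (Suc n) \<subseteq> X n)"

text \<open>Complete: the canonical map to the inverse limit is bijective (it is then automatically a
homeomorphism for the inverse limit topology).\<close>
definition complete_ring :: "(nat \<Rightarrow> 'a::comm_ring_1 set) \<Rightarrow> bool" where
  "complete_ring I \<longleftrightarrow> lin_top I \<and>
     (\<forall>X. compatible_system I X \<longrightarrow> (\<exists>!b. \<forall>n. X n = (\<lambda>y. b + y) ` I n))"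

definition cont_map :: "(nat \<Rightarrow> 'a::comm_ring_1 set) \<Rightarrow> (nat \<Rightarrow> 'c::comm_ring_1 set) \<Rightarrow> ('a \<Rightarrow> 'c) \<Rightarrow> bool" where
  "cont_map IX IY f \<longleftrightarrow> (\<forall>x m. \<exists>n. \<forall>y\<in>IX n. f (x + y) - f x \<in> IY m)"

definition ring_hom_fun :: "('a::comm_ring_1 \<Rightarrow> 'c::comm_ring_1) \<Rightarrow> bool" where
  "ring_hom_fun f \<longleftrightarrow> f 1 = 1 \<and> (\<forall>x y. f (x + y) = f x + f y) \<and> (\<forall>x y. f (x * y) = f x * f y)"

definition restricted_fps :: "(nat \<Rightarrow> 'b::comm_ring_1 set) \<Rightarrow> 'b fps \<Rightarrow> bool" where
  "restricted_fps IB s \<longleftrightarrow> (\<forall>J. open_ideal IB J \<longrightarrow> finite {i. fps_nth s i \<notin> J})"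

definition fps_top :: "(nat \<Rightarrow> 'b::comm_ring_1 set) \<Rightarrow> nat \<Rightarrow> 'b fps set" where
  "fps_top IB m = {s. \<forall>i. fps_nth s i \<in> IB m}"

text \<open>Restricted exponential A-homomorphisms e : B \<rightarrow> B{T}, where the A-algebra structure
of B is given by phi and that of B{T} by constants. The identity in B{T,T'} is stated
coefficientwise (coefficient of T^i T'^j).\<close>
definition restricted_exp_hom :: "(nat \<Rightarrow> 'b::comm_ring_1 set) \<Rightarrow> ('a::comm_ring_1 \<Rightarrow> 'b) \<Rightarrow> ('b \<Rightarrow> 'b fps) \<Rightarrow> bool" where
  "restricted_exp_hom IB \<phi> e \<longleftrightarrow>
     (\<forall>b. restricted_fps IB (e b)) \<and> ring_hom_fun e \<and> (\<forall>a. e (\<phi> a) = fps_const (\<phi> a)) \<and>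
     cont_map IB (fps_top IB) e \<and>
     (\<forall>b. fps_nth (e b) 0 = b) \<and>
     (\<forall>b i j. fps_nth (e (fps_nth (e b) i)) j = of_nat ((i + j) choose i) * fps_nth (e b) (i + j))"

definition iterated_higher_deriv :: "(nat \<Rightarrow> 'b::comm_ring_1 set) \<Rightarrow> ('a::comm_ring_1 \<Rightarrow> 'b) \<Rightarrow> (nat \<Rightarrow> 'b \<Rightarrow> 'b) \<Rightarrow> bool" where
  "iterated_higher_deriv IB \<phi> D \<longleftrightarrow>
     (\<forall>i. (\<forall>x y. D i (x + y) = D i x + D i y) \<and> (\<forall>a x. D i (\<phi> a * x) = \<phi> a * D i x) \<and>
          cont_map IB IB (D i)) \<and>
     D 0 = id \<and>
     (\<forall>i b b'. D i (b * b') = (\<Sum>j\<le>i. D j b * D (i - j) b')) \<and>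
     (\<forall>i j. D i \<circ> D j = (\<lambda>b. of_nat ((i + j) choose i) * D (i + j) b))"

definition topologically_integrable :: "(nat \<Rightarrow> 'b::comm_ring_1 set) \<Rightarrow> (nat \<Rightarrow> 'b \<Rightarrow> 'b) \<Rightarrow> bool" where
  "topologically_integrable IB D \<longleftrightarrow>
     (\<forall>b J'. open_ideal IB J' \<longrightarrow>
        (\<exists>J n0. open_ideal IB J \<and> (\<forall>n\<ge>n0. \<forall>y\<in>J. D n (b + y) \<in> J')))"

end

theory Submission
  imports Defs
begin

lemma choose_sym_add: "(i + j) choose i = (j + i) choose (j::nat)"
  by (metis add.commute add_diff_cancel_left' binomial_symmetric le_add1)

lemma lt_ideal: "lin_top I \<Longrightarrow> ideal_in (I n)"
  by (simp add: lin_top_def)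

lemma lt_mono: "lin_top I \<Longrightarrow> m \<le> n \<Longrightarrow> I n \<subseteq> I m"
  unfolding lin_top_def by (rule lift_Suc_antimono_le[of I]) auto

lemma lt_open: "lin_top I \<Longrightarrow> open_ideal I (I n)"
  by (auto simp: open_ideal_def lt_ideal)

lemma deriv_one:
  fixes D :: "nat \<Rightarrow> 'b::comm_ring_1 \<Rightarrow> 'b"
  assumes D0: "D 0 = id"
    and L: "\<And>i b b'. D i (b * b') = (\<Sum>j\<le>i. D j b * D (i - j) b')"
  shows "0 < i \<Longrightarrow> D i 1 = 0"
proof (induction i rule: less_induct)
  case (less i)
  then obtain k where k: "i = Suc k" by (cases i) auto
  let ?f = "\<lambda>j. D j 1 * D (Suc k - j) 1"
  have mid: "(\<Sum>j<k. ?f (Suc j)) = 0"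
  proof (rule sum.neutral, rule ballI)
    fix j assume "j \<in> {..<k}"
    then have "Suc j < i" using k by auto
    then have "D (Suc j) 1 = 0" using less by auto
    then show "?f (Suc j) = 0" by simp
  qed
  have "D i 1 = D i (1 * 1)" by simp
  also have "\<dots> = (\<Sum>j\<le>Suc k. ?f j)" by (simp only: L k)
  also have "\<dots> = ?f 0 + (\<Sum>j\<le>k. ?f (Suc j))" by (rule sum.atMost_Suc_shift)
  also have "(\<Sum>j\<le>k. ?f (Suc j)) = ?f (Suc k) + (\<Sum>j<k. ?f (Suc j))"
    by (simp add: lessThan_Suc_atMost[symmetric])
  finally have "D i 1 = D i 1 + D i 1" using mid D0 k by simp
  then show ?case by simp
qed

lemma e_to_D:
  assumes lt: "lin_top IB" and E: "restricted_exp_hom IB \<phi> e"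
  shows "iterated_higher_deriv IB \<phi> (\<lambda>i b. fps_nth (e b) i) \<and>
         topologically_integrable IB (\<lambda>i b. fps_nth (e b) i)"
proof -
  have R: "\<And>b. restricted_fps IB (e b)" and H: "ring_hom_fun e"
    and P: "\<And>a. e (\<phi> a) = fps_const (\<phi> a)" and C: "cont_map IB (fps_top IB) e"
    and Z: "\<And>b. fps_nth (e b) 0 = b"
    and X: "\<And>b i j. fps_nth (e (fps_nth (e b) i)) j = of_nat ((i + j) choose i) * fps_nth (e b) (i + j)"
    using E unfolding restricted_exp_hom_def by auto
  have add: "\<And>x y. e (x + y) = e x + e y" and mul: "\<And>x y. e (x * y) = e x * e y"
    using H unfolding ring_hom_fun_def by auto
  have cont: "\<And>x m. \<exists>n. \<forall>y\<in>IB n. \<forall>i. fps_nth (e (x + y)) i - fps_nth (e x) i \<in> IB m"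
    using C unfolding cont_map_def fps_top_def by auto
  have ihd: "iterated_higher_deriv IB \<phi> (\<lambda>i b. fps_nth (e b) i)"
    unfolding iterated_higher_deriv_def
  proof (intro conjI)
    show "\<forall>i. (\<forall>x y. fps_nth (e (x + y)) i = fps_nth (e x) i + fps_nth (e y) i) \<and>
        (\<forall>a x. fps_nth (e (\<phi> a * x)) i = \<phi> a * fps_nth (e x) i) \<and>
        cont_map IB IB (\<lambda>b. fps_nth (e b) i)"
      using cont unfolding cont_map_def by (simp add: add mul P) blast
    show "(\<lambda>b. fps_nth (e b) 0) = id" using Z by auto
    show "\<forall>i b b'. fps_nth (e (b * b')) i = (\<Sum>j\<le>i. fps_nth (e b) j * fps_nth (e b') (i - j))"
      by (simp add: mul fps_mult_nth atLeast0AtMost)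
    show "\<forall>i j. (\<lambda>b. fps_nth (e b) i) \<circ> (\<lambda>b. fps_nth (e b) j) =
          (\<lambda>b. of_nat ((i + j) choose i) * fps_nth (e b) (i + j))"
    proof (intro allI ext)
      fix i j b
      show "((\<lambda>b. fps_nth (e b) i) \<circ> (\<lambda>b. fps_nth (e b) j)) b =
          of_nat ((i + j) choose i) * fps_nth (e b) (i + j)"
        using X[of b j i] by (simp add: choose_sym_add[of i j] add.commute)
    qed
  qed
  have ti: "topologically_integrable IB (\<lambda>i b. fps_nth (e b) i)"
    unfolding topologically_integrable_def
  proof (intro allI impI)
    fix b J' assume J': "open_ideal IB J'"
    then obtain k where k: "IB k \<subseteq> J'" and iJ: "ideal_in J'" unfolding open_ideal_def by auto
    obtain n where n: "\<forall>y\<in>IB n. \<forall>i. fps_nth (e (b + y)) i - fps_nth (e b) i \<in> IB k"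
      using cont by blast
    have "finite {i. fps_nth (e b) i \<notin> J'}" using R J' unfolding restricted_fps_def by auto
    then obtain n0 where n0: "\<forall>i\<in>{i. fps_nth (e b) i \<notin> J'}. i < n0"
      unfolding finite_nat_set_iff_bounded by auto
    have "\<forall>m\<ge>n0. \<forall>y\<in>IB n. fps_nth (e (b + y)) m \<in> J'"
    proof (intro allI impI ballI)
      fix m y assume "n0 \<le> m" "y \<in> IB n"
      then have a: "fps_nth (e b) m \<in> J'" using n0 by force
      have "fps_nth (e (b + y)) m - fps_nth (e b) m \<in> J'" using n \<open>y \<in> IB n\<close> k by blast
      with a have "fps_nth (e b) m + (fps_nth (e (b + y)) m - fps_nth (e b) m) \<in> J'"
        using iJ unfolding ideal_in_def by blast
      then show "fps_nth (e (b + y)) m \<in> J'" by simp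
    qed
    then show "\<exists>J n0. open_ideal IB J \<and> (\<forall>m\<ge>n0. \<forall>y\<in>J. fps_nth (e (b + y)) m \<in> J')"
      using lt_open[OF lt] by blast
  qed
  show ?thesis using ihd ti by blast
qed

lemma D_to_e:
  assumes lt: "lin_top IB" and ph: "ring_hom_fun \<phi>"
    and D: "iterated_higher_deriv IB \<phi> D" and T: "topologically_integrable IB D"
  shows "restricted_exp_hom IB \<phi> (\<lambda>b. Abs_fps (\<lambda>i. D i b))"
proof -
  have add: "\<And>i x y. D i (x + y) = D i x + D i y"
    and lin: "\<And>i a x. D i (\<phi> a * x) = \<phi> a * D i x"
    and cD: "\<And>i. cont_map IB IB (D i)"
    and D0: "D 0 = id"
    and L: "\<And>i b b'. D i (b * b') = (\<Sum>j\<le>i. D j b * D (i - j) b')"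
    and CC: "\<And>i j. D i \<circ> D j = (\<lambda>b. of_nat ((i + j) choose i) * D (i + j) b)"
    using D unfolding iterated_higher_deriv_def by auto
  have D00: "\<And>i. D i 0 = 0" using add[of _ 0 0] by simp
  have one: "\<And>i. D i 1 = (if i = 0 then 1 else 0)"
    using deriv_one[OF D0 L] D0 by auto
  have Ti: "\<And>b J'. open_ideal IB J' \<Longrightarrow> \<exists>J n0. open_ideal IB J \<and> (\<forall>n\<ge>n0. \<forall>y\<in>J. D n (b + y) \<in> J')"
    using T unfolding topologically_integrable_def by blast
  let ?e = "\<lambda>b. Abs_fps (\<lambda>i. D i b)"
  have restr: "\<forall>b. restricted_fps IB (?e b)"
    unfolding restricted_fps_def
  proof (intro allI impI)
    fix b J assume J: "open_ideal IB J"
    obtain J0 n0 where "open_ideal IB J0" and n0: "\<forall>n\<ge>n0. \<forall>y\<in>J0. D n (b + y) \<in> J"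
      using Ti[OF J] by blast
    then have "0 \<in> J0" unfolding open_ideal_def ideal_in_def by auto
    then have "\<forall>n\<ge>n0. D n b \<in> J" using n0 by force
    then have "{i. fps_nth (?e b) i \<notin> J} \<subseteq> {..<n0}" by (auto simp: not_less[symmetric])
    then show "finite {i. fps_nth (?e b) i \<notin> J}" using finite_subset by blast
  qed
  have hom: "ring_hom_fun ?e"
    unfolding ring_hom_fun_def
  proof (intro conjI allI)
    show "?e 1 = 1" by (rule fps_ext) (simp add: one)
  next
    fix x y
    show "?e (x + y) = ?e x + ?e y" by (rule fps_ext) (simp add: add)
    show "?e (x * y) = ?e x * ?e y" by (rule fps_ext) (simp add: L fps_mult_nth atLeast0AtMost)
  qed
  have ph1: "\<phi> 1 = 1" using ph unfolding ring_hom_fun_def by auto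
  have con: "\<forall>a. ?e (\<phi> a) = fps_const (\<phi> a)"
  proof
    fix a
    have "\<And>i. D i (\<phi> a) = \<phi> a * D i 1" using lin[of _ a 1] by simp
    then show "?e (\<phi> a) = fps_const (\<phi> a)" by (intro fps_ext) (simp add: one)
  qed
  have cont: "cont_map IB (fps_top IB) ?e"
    unfolding cont_map_def fps_top_def
  proof (intro allI)
    fix x m
    obtain J n0 where J: "open_ideal IB J" and n0: "\<forall>n\<ge>n0. \<forall>y\<in>J. D n (0 + y) \<in> IB m"
      using Ti[OF lt_open[OF lt, of m], of 0] by blast
    obtain k where k: "IB k \<subseteq> J" using J unfolding open_ideal_def by auto
    have "\<forall>i. \<exists>n. \<forall>y\<in>IB n. D i (0 + y) - D i 0 \<in> IB m"
      using cD unfolding cont_map_def by blast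
    then obtain nf where nf: "\<And>i. \<forall>y\<in>IB (nf i). D i (0 + y) - D i 0 \<in> IB m" by metis
    define N where "N = k + (\<Sum>i<n0. nf i)"
    have "\<forall>y\<in>IB N. \<forall>i. fps_nth (?e (x + y) - ?e x) i \<in> IB m"
    proof (intro ballI allI)
      fix y i assume y: "y \<in> IB N"
      have "fps_nth (?e (x + y) - ?e x) i = D i y" by (simp add: add)
      moreover have "D i y \<in> IB m"
      proof (cases "i < n0")
        case True
        have "nf i \<le> N" unfolding N_def using True
          by (metis (no_types, lifting) finite_lessThan lessThan_iff member_le_sum trans_le_add2 zero_le)
        then have "y \<in> IB (nf i)" using lt_mono[OF lt] y by blast
        then show ?thesis using nf[of i] D00 by auto
      next
        case False
        have "k \<le> N" unfolding N_def by simp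
        then have "y \<in> J" using lt_mono[OF lt] y k by blast
        then show ?thesis using n0 False by auto
      qed
      ultimately show "fps_nth (?e (x + y) - ?e x) i \<in> IB m" by simp
    qed
    then show "\<exists>n. \<forall>y\<in>IB n. ?e (x + y) - ?e x \<in> {s. \<forall>i. fps_nth s i \<in> IB m}" by blast
  qed
  have z: "\<forall>b. fps_nth (?e b) 0 = b" using D0 by simp
  have comp: "\<forall>b i j. fps_nth (?e (fps_nth (?e b) i)) j = of_nat ((i + j) choose i) * fps_nth (?e b) (i + j)"
  proof (intro allI)
    fix b i j
    have "D j (D i b) = of_nat ((j + i) choose j) * D (j + i) b"
      using fun_cong[OF CC[of j i], of b] by simp
    then show "fps_nth (?e (fps_nth (?e b) i)) j = of_nat ((i + j) choose i) * fps_nth (?e b) (i + j)"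
      by (simp add: choose_sym_add[of i j] add.commute)
  qed
  show ?thesis unfolding restricted_exp_hom_def using restr hom con cont z comp by blast
qed

theorem theorem2p26:
  fixes IA :: "nat \<Rightarrow> 'a::comm_ring_1 set" and IB :: "nat \<Rightarrow> 'b::comm_ring_1 set"
    and \<phi> :: "'a \<Rightarrow> 'b"
  assumes "complete_ring IA" and "complete_ring IB"
    and "ring_hom_fun \<phi>" and "cont_map IA IB \<phi>"
  shows "bij_betw (\<lambda>e i b. fps_nth (e b) i) {e. restricted_exp_hom IB \<phi> e}
           {D. iterated_higher_deriv IB \<phi> D \<and> topologically_integrable IB D}
       \<and> (\<forall>D. iterated_higher_deriv IB \<phi> D \<and> topologically_integrable IB D \<longrightarrow>
             restricted_exp_hom IB \<phi> (\<lambda>b. Abs_fps (\<lambda>i. D i b)))"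
proof -
  have lt: "lin_top IB" using assms(2) unfolding complete_ring_def by simp
  have second: "\<forall>D. iterated_higher_deriv IB \<phi> D \<and> topologically_integrable IB D \<longrightarrow>
             restricted_exp_hom IB \<phi> (\<lambda>b. Abs_fps (\<lambda>i. D i b))"
    using D_to_e[OF lt assms(3)] by blast
  have inj: "inj_on (\<lambda>e i b. fps_nth (e b) i) {e. restricted_exp_hom IB \<phi> e}"
  proof (rule inj_onI)
    fix e e' :: "'b \<Rightarrow> 'b fps"
    assume "(\<lambda>i b. fps_nth (e b) i) = (\<lambda>i b. fps_nth (e' b) i)"
    then have "\<And>i b. fps_nth (e b) i = fps_nth (e' b) i" by metis
    then show "e = e'" by (intro ext fps_ext) simp
  qed
  have img: "(\<lambda>e i b. fps_nth (e b) i) ` {e. restricted_exp_hom IB \<phi> e} =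
           {D. iterated_higher_deriv IB \<phi> D \<and> topologically_integrable IB D}"
  proof
    show "(\<lambda>e i b. fps_nth (e b) i) ` {e. restricted_exp_hom IB \<phi> e} \<subseteq>
           {D. iterated_higher_deriv IB \<phi> D \<and> topologically_integrable IB D}"
      using e_to_D[OF lt] by blast
  next
    show "{D. iterated_higher_deriv IB \<phi> D \<and> topologically_integrable IB D} \<subseteq>
          (\<lambda>e i b. fps_nth (e b) i) ` {e. restricted_exp_hom IB \<phi> e}"
    proof
      fix D assume "D \<in> {D. iterated_higher_deriv IB \<phi> D \<and> topologically_integrable IB D}"
      then have "restricted_exp_hom IB \<phi> (\<lambda>b. Abs_fps (\<lambda>i. D i b))" using second by blast
      moreover have "D = (\<lambda>i b. fps_nth ((\<lambda>b. Abs_fps (\<lambda>i. D i b)) b) i)" by simp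
      ultimately show "D \<in> (\<lambda>e i b. fps_nth (e b) i) ` {e. restricted_exp_hom IB \<phi> e}" by (intro rev_image_eqI) auto
    qed
  qed
  show ?thesis using inj img second unfolding bij_betw_def by blast
qed

end
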